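(* There exists a universal constant $c_4>0$ such that the following holds. Fix $s>0$ and $\delta\in(0,\delta_0)$. For every integer $n\ge1$, every partition $\lambda=1^{n_1}2^{n_2}\cdots$ of $n$, and every integer $a$ with $a\ge\delta n^{5/4}\ge e^{c_1}n$, \[ e^{-c_4n^2/a^2}\le\prod_{i\ge2}\mathsf K_{a,i}\le e^{c_4n^2/a^2}. \]
   Context: For integers $a,i\ge1$ let $f_{a,i}=\frac1{2i}\sum_{d\mid i,\ d\text{ odd}}\mu(d)(2a)^{i/d}$ ($\mu$ the Möbius function; sum over positive odd divisors of $i$), a positive integer, and define $g_{a,i}$ by $f_{a,i}=\frac{(2a)^i}{2i}g_{a,i}$. Let $c_1>0$ be a fixed constant such that $e^{-c_1(2a)^{-2i/3}}\le g_{a,i}\le e^{c_1(2a)^{-2i/3}}$ for all $a,i\ge1$ (e.g. $c_1=4$). For $s>0$ and $n\ge1$ let $t_n\in(0,1)$ be the unique solution in $(0,1)$ of $\frac{4t}{(1+t)^2}=e^{-s/\sqrt n}$, and $\delta_0=\left[\sup_{n\ge1}\left(n^{1/4}\log(1/t_n)e^{(c_1/4)+1}\right)\right]^{-1}$. Given a partition $\lambda$ of $n$ with $n_i$ parts of size $i$, let \[ \mathsf K_{a,i}=\sum_{\nu=0}^{n_i}\frac1{2^{n_i}}\binom{n_i}{\nu}\frac{(f_{a,i}-\nu+n_i-1)!}{(f_{a,i}-\nu)!\,f_{a,i}^{\,n_i-1}}, \] equivalently $\mathsf K_{a,i}=\frac{n_i!}{(2f_{a,i})^{n_i}}[x^{n_i}]\left(\frac{1+x}{1-x}\right)^{f_{a,i}}$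 (the ratio of factorials means $\prod_{k=1}^{n_i-1}(f_{a,i}-\nu+k)$ when $n_i\ge1$, and $\mathsf K_{a,i}=1$ when $n_i=0$). The product $\prod_{i\ge2}$ runs over $2\le i\le n$. *)

theory Defs
  imports "HOL-Analysis.Analysis" "HOL-Computational_Algebra.Squarefree"
begin

definition mu :: "nat \<Rightarrow> int" where
  "mu d = (if squarefree d then (-1) ^ card (prime_factors d) else 0)"

definition f_ai :: "nat \<Rightarrow> nat \<Rightarrow> real" where
  "f_ai a i = (\<Sum>d\<in>{d. d dvd i \<and> odd d}. real_of_int (mu d) * (2 * real a) ^ (i div d)) / (2 * real i)"

definition g_ai :: "nat \<Rightarrow> nat \<Rightarrow> real" where
  "g_ai a i = f_ai a i * (2 * real i) / (2 * real a) ^ i"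

definition t_n :: "real \<Rightarrow> nat \<Rightarrow> real" where
  "t_n s n = (THE t. 0 < t \<and> t < 1 \<and> 4 * t / (1 + t)^2 = exp (- s / sqrt (real n)))"

definition delta0 :: "real \<Rightarrow> real \<Rightarrow> real" where
  "delta0 c1 s = inverse (SUP n\<in>{n::nat. n \<ge> 1}.
      real n powr (1/4) * ln (1 / t_n s n) * exp (c1 / 4 + 1))"

text \<open>Partition of n given by multiplicities m i (number of parts of size i).\<close>
definition is_partition_mult :: "nat \<Rightarrow> (nat \<Rightarrow> nat) \<Rightarrow> bool" where
  "is_partition_mult n m \<longleftrightarrow> m 0 = 0 \<and> (\<forall>i>n. m i = 0) \<and> (\<Sum>i=1..n. i * m i) = n"

text \<open>K_{a,i} for multiplicity k = n_i; falling ratio of factorials written as a product.\<close>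
definition K_ai :: "nat \<Rightarrow> nat \<Rightarrow> nat \<Rightarrow> real" where
  "K_ai a i k = (if k = 0 then 1 else
     (\<Sum>\<nu>=0..k. (1 / 2 ^ k) * real (k choose \<nu>) *
        (\<Prod>j=1..k-1. f_ai a i - real \<nu> + real j) / (f_ai a i) ^ (k - 1)))"

end

theory Submission
  imports Defs
begin

lemma exp_x_minus: fixes x::real assumes "\<bar>x\<bar> \<le> 1/2" shows "exp (x - 2*x^2) \<le> 1 + x"
proof -
  have "\<bar>ln (1 + x) - x\<bar> \<le> 2 * x^2" using abs_ln_one_plus_x_minus_x_bound assms by blast
  hence "x - 2*x^2 \<le> ln (1+x)" by linarith
  moreover have "1 + x > 0" using assms by linarith
  ultimately show ?thesis by (metis exp_le_cancel_iff exp_ln)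
qed

lemma cosh_bounds: fixes v::real assumes "0 \<le> v" "v \<le> 1"
  shows "1 \<le> (exp v + exp (-v))/2" "(exp v + exp (-v))/2 \<le> exp (v^2)"
proof -
  have e: "exp (-v) = 1 / exp v" by (simp add: exp_minus inverse_eq_divide)
  have "(exp v - 1)^2 \<ge> 0" by simp
  hence "exp v + 1/exp v \<ge> 2" by (simp add: field_simps power2_eq_square)
  thus "1 \<le> (exp v + exp (-v))/2" using e by simp
  have a: "exp v \<le> 1 + v + v^2" using exp_bound assms by blast
  have "1 + v \<le> exp v" by (rule exp_ge_add_one_self)
  hence "1/exp v \<le> 1/(1+v)" using assms by (simp add: frac_le)
  also have "1/(1+v) \<le> 1 - v + v^2"
  proof -
    have "(1+v)*(1 - v + v^2) = 1 + v^3" by (simp add: algebra_simps power2_eq_square power3_eq_cube)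
    moreover have "v^3 \<ge> 0" using assms by simp
    ultimately have "1 \<le> (1 - v + v^2) * (1 + v)" by (simp add: mult.commute)
    thus ?thesis using assms by (simp add: divide_le_eq)
  qed
  finally have "(exp v + exp (-v))/2 \<le> 1 + v^2" using a e by simp
  also have "\<dots> \<le> exp (v^2)" by (rule exp_ge_add_one_self)
  finally show "(exp v + exp (-v))/2 \<le> exp (v^2)" .
qed

lemma Kgen:
  fixes f :: real and k :: nat
  assumes fpos: "f > 0" and fk: "2 * real k \<le> f" and k1: "k \<ge> 1"
  defines "E \<equiv> 2 * real k ^ 3 / f ^ 2"
  shows "exp (- E) \<le> (\<Sum>\<nu>=0..k. (1 / 2 ^ k) * real (k choose \<nu>) *
        (\<Prod>j=1..k-1. f - real \<nu> + real j) / f ^ (k - 1))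
     \<and> (\<Sum>\<nu>=0..k. (1 / 2 ^ k) * real (k choose \<nu>) *
        (\<Prod>j=1..k-1. f - real \<nu> + real j) / f ^ (k - 1)) \<le> exp E"
proof -
  define w where "w \<nu> = (1 / 2 ^ k) * real (k choose \<nu>)" for \<nu>
  define P where "P \<nu> = (\<Prod>j=1..k-1. f - real \<nu> + real j) / f ^ (k - 1)" for \<nu>
  define u where "u = real (k - 1) / f"
  define A where "A = (\<Sum>j=1..k-1. real j / f)"
  define x where "x \<nu> j = (real j - real \<nu>) / f" for \<nu> j :: nat
  have sumeq: "(\<Sum>\<nu>=0..k. (1 / 2 ^ k) * real (k choose \<nu>) *
        (\<Prod>j=1..k-1. f - real \<nu> + real j) / f ^ (k - 1)) = (\<Sum>\<nu>=0..k. w \<nu> * P \<nu>)"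
    by (simp add: w_def P_def)
  have wnn: "w \<nu> \<ge> 0" for \<nu> by (simp add: w_def)
  have P_eq: "P \<nu> = (\<Prod>j=1..k-1. 1 + x \<nu> j)" for \<nu>
  proof -
    have "P \<nu> = (\<Prod>j=1..k-1. (f - real \<nu> + real j) / f)"
      by (simp add: P_def prod_dividef)
    also have "\<dots> = (\<Prod>j=1..k-1. 1 + x \<nu> j)"
      by (rule prod.cong) (use fpos in \<open>auto simp: x_def field_simps\<close>)
    finally show ?thesis .
  qed
  have xb: "\<bar>x \<nu> j\<bar> \<le> 1/2" "(x \<nu> j)^2 \<le> real k ^ 2 / f ^ 2"
    if "\<nu> \<le> k" "j \<in> {1..k-1}" for \<nu> j
  proof -
    have "\<bar>real j - real \<nu>\<bar> \<le> real k" using that by auto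
    hence b: "\<bar>x \<nu> j\<bar> \<le> real k / f" using fpos by (simp add: x_def abs_div divide_right_mono)
    have "real k / f \<le> 1/2" using fk fpos by (simp add: divide_le_eq)
    thus "\<bar>x \<nu> j\<bar> \<le> 1/2" using b by linarith
    have "(x \<nu> j)^2 = \<bar>x \<nu> j\<bar>^2" by simp
    also have "\<dots> \<le> (real k / f)^2" using b by (intro power_mono) auto
    finally show "(x \<nu> j)^2 \<le> real k ^ 2 / f ^ 2" by (simp add: power_divide)
  qed
  have sumx: "(\<Sum>j=1..k-1. x \<nu> j) = A - u * real \<nu>" for \<nu>
    by (simp add: x_def A_def u_def diff_divide_distrib sum_subtractf)
  have sumx2: "2 * (\<Sum>j=1..k-1. (x \<nu> j)^2) \<le> E" if "\<nu> \<le> k" for \<nu>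
  proof -
    have "(\<Sum>j=1..k-1. (x \<nu> j)^2) \<le> (\<Sum>j=1..k-1. real k ^ 2 / f ^ 2)"
      by (rule sum_mono) (use xb that in auto)
    also have "\<dots> = real (k - 1) * real k ^ 2 / f ^ 2" by simp
    also have "\<dots> \<le> real k * real k ^ 2 / f ^ 2"
      by (intro divide_right_mono mult_right_mono) auto
    finally show ?thesis by (simp add: E_def power3_eq_cube power2_eq_square)
  qed
  have Pup: "P \<nu> \<le> exp (A - u * real \<nu>)" if "\<nu> \<le> k" for \<nu>
  proof -
    have "P \<nu> \<le> (\<Prod>j=1..k-1. exp (x \<nu> j))"
      unfolding P_eq
    proof (rule prod_mono)
      fix j assume j: "j \<in> {1..k-1}"
      have "\<bar>x \<nu> j\<bar> \<le> 1/2" using xb(1)[OF that j] .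
      then show "0 \<le> 1 + x \<nu> j \<and> 1 + x \<nu> j \<le> exp (x \<nu> j)"
        using exp_ge_add_one_self[of "x \<nu> j"] by (simp add: abs_le_iff)
    qed
    also have "\<dots> = exp (\<Sum>j=1..k-1. x \<nu> j)" by (simp add: exp_sum)
    also have "\<dots> = exp (A - u * real \<nu>)" by (simp only: sumx)
    finally show ?thesis .
  qed
  have Plo: "exp (A - u * real \<nu> - E) \<le> P \<nu>" if "\<nu> \<le> k" for \<nu>
  proof -
    have "exp (A - u * real \<nu> - E) \<le> exp ((\<Sum>j=1..k-1. x \<nu> j) - 2 * (\<Sum>j=1..k-1. (x \<nu> j)^2))"
      using sumx2[OF that] sumx by simp
    also have "\<dots> = (\<Prod>j=1..k-1. exp (x \<nu> j - 2 * (x \<nu> j)^2))"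
      by (simp add: exp_sum[symmetric] sum_subtractf sum_distrib_left)
    also have "\<dots> \<le> P \<nu>"
      unfolding P_eq
    proof (rule prod_mono)
      fix j assume j: "j \<in> {1..k-1}"
      have "\<bar>x \<nu> j\<bar> \<le> 1/2" using xb(1)[OF that j] .
      then show "0 \<le> exp (x \<nu> j - 2 * (x \<nu> j)^2) \<and> exp (x \<nu> j - 2 * (x \<nu> j)^2) \<le> 1 + x \<nu> j"
        using exp_x_minus by simp
    qed
    finally show ?thesis .
  qed
  define v where "v = u / 2"
  define c where "c = (exp v + exp (-v)) / 2"
  have gauss: "2 * (\<Sum>j=1..k-1. real j) = real (k-1) * (real (k-1) + 1)"
    using double_gauss_sum_from_Suc_0[of "k-1", where 'a=real] by simp
  have A_eq: "A = real k * v"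
  proof -
    have "A = (\<Sum>j=1..k-1. real j) / f" by (simp add: A_def sum_divide_distrib)
    also have "\<dots> = real (k-1) * real k / (2 * f)" using gauss k1 fpos by (simp add: of_nat_diff field_simps)
    finally show ?thesis by (simp add: v_def u_def mult.commute)
  qed
  have M: "(\<Sum>\<nu>=0..k. w \<nu> * exp (A - u * real \<nu>)) = c ^ k"
  proof -
    have "(\<Sum>\<nu>=0..k. w \<nu> * exp (A - u * real \<nu>))
        = exp A / 2 ^ k * (\<Sum>\<nu>\<le>k. real (k choose \<nu>) * exp (-u) ^ \<nu> * 1 ^ (k - \<nu>))"
      by (simp add: w_def atLeast0AtMost sum_distrib_left exp_diff exp_minus
          exp_of_nat_mult[symmetric] mult.commute power_inverse field_simps)
    also have "\<dots> = exp A / 2 ^ k * (exp (-u) + 1) ^ k" by (simp add: binomial_ring)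
    also have "\<dots> = (exp v * (exp (-u) + 1) / 2) ^ k"
      by (simp add: A_eq exp_of_nat_mult power_mult_distrib power_divide)
    also have "exp v * (exp (-u) + 1) = exp v + exp (-v)"
      by (simp add: v_def distrib_left exp_add[symmetric])
    finally show ?thesis by (simp add: c_def)
  qed
  have v0: "0 \<le> v" "v \<le> 1" "v \<le> real k / (2 * f)"
    using fpos fk by (auto simp: v_def u_def field_simps)
  have c1: "1 \<le> c" and c2: "c \<le> exp (v^2)" using cosh_bounds[OF v0(1,2)] by (auto simp: c_def)
  have ck: "c ^ k \<le> exp E"
  proof -
    have "c ^ k \<le> exp (v^2) ^ k" using c1 c2 by (intro power_mono) auto
    also have "\<dots> = exp (real k * v^2)" by (simp add: exp_of_nat_mult)
    also have "real k * v^2 \<le> E"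
    proof -
      have "v^2 \<le> (real k / (2*f))^2" using v0 by (intro power_mono) auto
      hence "real k * v^2 \<le> real k * (real k / (2*f))^2" by (intro mult_left_mono) auto
      also have "\<dots> \<le> E" using fpos by (simp add: E_def power2_eq_square power3_eq_cube field_simps)
      finally show ?thesis .
    qed
    finally show ?thesis by simp
  qed
  have up: "(\<Sum>\<nu>=0..k. w \<nu> * P \<nu>) \<le> exp E"
  proof -
    have "(\<Sum>\<nu>=0..k. w \<nu> * P \<nu>) \<le> (\<Sum>\<nu>=0..k. w \<nu> * exp (A - u * real \<nu>))"
      by (rule sum_mono) (use Pup wnn in \<open>auto intro: mult_left_mono\<close>)
    thus ?thesis using M ck by simp
  qed
  have lo: "exp (-E) \<le> (\<Sum>\<nu>=0..k. w \<nu> * P \<nu>)"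
  proof -
    have "exp (-E) \<le> exp (-E) * c ^ k" using c1 by simp
    also have "\<dots> = (\<Sum>\<nu>=0..k. exp (-E) * (w \<nu> * exp (A - u * real \<nu>)))"
      by (simp add: M[symmetric] sum_distrib_left)
    also have "\<dots> = (\<Sum>\<nu>=0..k. w \<nu> * exp (A - u * real \<nu> - E))"
    proof (intro sum.cong refl)
      fix \<nu> :: nat
      have "exp (A - u * real \<nu> - E) = exp (A - u * real \<nu>) * exp (-E)"
        by (simp add: exp_add[symmetric])
      thus "exp (-E) * (w \<nu> * exp (A - u * real \<nu>)) = w \<nu> * exp (A - u * real \<nu> - E)"
        by simp
    qed
    also have "\<dots> \<le> (\<Sum>\<nu>=0..k. w \<nu> * P \<nu>)"
      by (rule sum_mono) (use Plo wnn in \<open>auto intro: mult_left_mono\<close>)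
    finally show ?thesis .
  qed
  show ?thesis using up lo sumeq by simp
qed

lemma K_ai_bound:
  assumes "f_ai a i > 0" "2 * real k \<le> f_ai a i"
  shows "exp (- (2 * real k ^ 3 / f_ai a i ^ 2)) \<le> K_ai a i k \<and> K_ai a i k \<le> exp (2 * real k ^ 3 / f_ai a i ^ 2)"
proof (cases "k = 0")
  case True thus ?thesis by (simp add: K_ai_def)
next
  case False
  hence "k \<ge> 1" by simp
  from Kgen[OF assms this] False show ?thesis by (simp add: K_ai_def)
qed

theorem lemma3p4:
  fixes c1 :: real
  assumes c1_pos: "c1 > 0"
    and c1_bound: "\<forall>a i. a \<ge> 1 \<longrightarrow> i \<ge> 1 \<longrightarrow>
         exp (- c1 * (2 * real a) powr (- 2 * real i / 3)) \<le> g_ai a i \<and>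
         g_ai a i \<le> exp (c1 * (2 * real a) powr (- 2 * real i / 3))"
  shows "\<exists>c4>0. \<forall>s \<delta> (n::nat) (m::nat \<Rightarrow> nat) (a::nat).
     s > 0 \<longrightarrow> 0 < \<delta> \<longrightarrow> \<delta> < delta0 c1 s \<longrightarrow> n \<ge> 1 \<longrightarrow>
     is_partition_mult n m \<longrightarrow>
     real a \<ge> \<delta> * real n powr (5/4) \<longrightarrow> \<delta> * real n powr (5/4) \<ge> exp c1 * real n \<longrightarrow>
     exp (- c4 * real n ^ 2 / real a ^ 2) \<le> (\<Prod>i=2..n. K_ai a i (m i)) \<and>
     (\<Prod>i=2..n. K_ai a i (m i)) \<le> exp (c4 * real n ^ 2 / real a ^ 2)"
proof (intro exI[of _ "exp (2 * c1)"] conjI allI impI)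
  show "exp (2 * c1) > 0" by simp
  fix s \<delta> :: real and n :: nat and m :: "nat \<Rightarrow> nat" and a :: nat
  assume n1: "n \<ge> 1" and part: "is_partition_mult n m"
    and h1: "real a \<ge> \<delta> * real n powr (5/4)" and h2: "\<delta> * real n powr (5/4) \<ge> exp c1 * real n"
  define N where "N = real n"
  define R where "R = real a"
  define C where "C = exp c1"
  have C1: "C > 1" using c1_pos by (simp add: C_def)
  have N1: "N \<ge> 1" using n1 by (simp add: N_def)
  have RCN: "R \<ge> C * N" using h1 h2 by (simp add: R_def C_def N_def)
  have "1 * N \<le> C * N" using C1 N1 by (intro mult_right_mono) auto
  hence RN: "R \<ge> N" using RCN by simp
  have R1: "R \<ge> 1" using RN N1 by simp
  have a1: "a \<ge> 1" using R1 by (simp add: R_def)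
  define eps where "eps i = 2 * real (m i) ^ 3 / f_ai a i ^ 2" for i
  have key: "f_ai a i > 0 \<and> 2 * real (m i) \<le> f_ai a i \<and> eps i \<le> C^2 * N^3 / (2 * R^4)"
    if i: "i \<in> {2..n}" for i
  proof -
    have i1: "i \<ge> 1" "i \<ge> 2" using i by auto
    have "exp (- c1 * (2 * real a) powr (- 2 * real i / 3)) \<le> g_ai a i"
      using c1_bound a1 i1 by blast
    moreover have "(2 * real a) powr (- 2 * real i / 3) \<le> 1"
    proof -
      have "(2 * real a) powr (- 2 * real i / 3) \<le> (2 * real a) powr 0"
        by (rule powr_mono) (use a1 in auto)
      thus ?thesis using a1 by simp
    qed
    moreover have "- c1 \<le> - c1 * (2 * real a) powr (- 2 * real i / 3)"
      using calculation(2) c1_pos by (simp add: mult_left_le)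
    ultimately have "exp (- c1) \<le> g_ai a i" by (meson exp_le_cancel_iff order_trans)
    hence g: "g_ai a i \<ge> 1 / C" by (simp add: C_def exp_minus inverse_eq_divide)
    have pos2R: "(2 * R) ^ i > 0" using R1 by simp
    have fdef: "f_ai a i = g_ai a i * (2 * R) ^ i / (2 * real i)"
      using pos2R i1 a1 by (simp add: g_ai_def R_def field_simps)
    define F where "F = (2 * R) ^ i / (2 * real i) / C"
    have F: "F \<le> f_ai a i"
    proof -
      have "F = (1 / C) * (2 * R) ^ i / (2 * real i)" by (simp add: F_def)
      also have "\<dots> \<le> g_ai a i * (2 * R) ^ i / (2 * real i)"
        using g pos2R i1 by (intro divide_right_mono mult_right_mono) auto
      finally show ?thesis by (simp add: fdef)
    qed
    have iF: "real i * F \<ge> 2 * R^2 / C"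
    proof -
      have "(2*R)^2 \<le> (2*R)^i" using R1 i1 by (intro power_increasing) auto
      thus ?thesis using i1 C1 by (simp add: F_def field_simps power2_eq_square)
    qed
    have Fpos: "F > 0" using pos2R i1 C1 by (simp add: F_def)
    have mi: "real i * real (m i) \<le> N"
    proof -
      have "i * m i \<le> (\<Sum>j=1..n. j * m j)" using i by (intro member_le_sum) auto
      thus ?thesis using part by (simp add: is_partition_mult_def N_def flip: of_nat_mult)
    qed
    define t where "t = real (m i) / f_ai a i"
    have fpos: "f_ai a i > 0" using F Fpos by simp
    have t0: "t \<ge> 0" using fpos by (simp add: t_def)
    have tb: "t \<le> C * N / (2 * R^2)"
    proof -
      have "t \<le> real (m i) / F" unfolding t_def using F Fpos by (intro divide_left_mono) auto
      also have "\<dots> = real i * real (m i) / (real i * F)" using i1 by simp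
      also have "\<dots> \<le> N / (2 * R^2 / C)"
        using mi iF C1 R1 N1 by (intro frac_le) auto
      finally show ?thesis using C1 by (simp add: field_simps)
    qed
    have "C * N / (2 * R^2) \<le> 1/2"
    proof -
      have "C * N \<le> R" using RCN by simp
      also have "R \<le> R^2" using R1 by (simp add: power2_eq_square)
      finally show ?thesis using R1 by (simp add: field_simps)
    qed
    hence "t \<le> 1/2" using tb by linarith
    hence m2: "2 * real (m i) \<le> f_ai a i" using fpos by (simp add: t_def field_simps)
    have "eps i = 2 * real (m i) * t^2" by (simp add: eps_def t_def power2_eq_square power3_eq_cube)
    also have "\<dots> \<le> 2 * N * (C * N / (2 * R^2))^2"
    proof -
      have "1 * real (m i) \<le> real i * real (m i)" using i1 by (intro mult_right_mono) auto
      hence a: "2 * real (m i) \<le> 2 * N" using mi by simp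
      have b: "t^2 \<le> (C * N / (2 * R^2))^2" using t0 tb by (intro power_mono) auto
      show ?thesis using a b N1 by (intro mult_mono) auto
    qed
    also have "\<dots> = C^2 * N^3 / (2 * R^4)" using R1 by (simp add: field_simps power2_eq_square power3_eq_cube power4_eq_xxxx)
    finally show ?thesis using fpos m2 by simp
  qed
  have epsnn: "eps i \<ge> 0" for i by (simp add: eps_def)
  have Ksb: "exp (- eps i) \<le> K_ai a i (m i) \<and> K_ai a i (m i) \<le> exp (eps i)" if "i \<in> {2..n}" for i
    using K_ai_bound[of a i "m i"] key[OF that] by (simp add: eps_def)
  have sumeps: "(\<Sum>i=2..n. eps i) \<le> exp (2 * c1) * real n ^ 2 / real a ^ 2"
  proof -
    have "(\<Sum>i=2..n. eps i) \<le> (\<Sum>i=2..n. C^2 * N^3 / (2 * R^4))"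
      by (rule sum_mono) (use key in blast)
    also have "\<dots> = real (n - 1) * (C^2 * N^3 / (2 * R^4))" by simp
    also have "\<dots> \<le> N * (C^2 * N^3 / (2 * R^4))"
      by (intro mult_right_mono) (auto simp: N_def)
    also have "\<dots> \<le> C^2 * N^2 / R^2"
    proof -
      have "N^2 \<le> R^2" using RN N1 by (intro power_mono) auto
      hence "N^2 \<le> 2 * R^2" using zero_le_power2[of R] by linarith
      hence q: "N^2/(2*R^2) \<le> 1" using R1 by (simp add: field_simps)
      have "N * (C^2 * N^3 / (2 * R^4)) = (C^2 * N^2 / R^2) * (N^2/(2*R^2))"
        using R1 by (simp add: field_simps power2_eq_square power3_eq_cube power4_eq_xxxx)
      also have "\<dots> \<le> C^2 * N^2 / R^2" using q by (intro mult_left_le) auto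
      finally show ?thesis .
    qed
    also have "\<dots> = exp (2 * c1) * real n ^ 2 / real a ^ 2"
      by (simp add: C_def N_def R_def power2_eq_square mult.commute exp_add[symmetric])
    finally show ?thesis .
  qed
  have "(\<Prod>i=2..n. K_ai a i (m i)) \<le> (\<Prod>i=2..n. exp (eps i))"
    by (rule prod_mono) (use Ksb in \<open>auto intro: order_trans[OF _ conjunct1[OF Ksb]]\<close>)
  also have "\<dots> = exp (\<Sum>i=2..n. eps i)" by (simp add: exp_sum)
  also have "\<dots> \<le> exp (exp (2 * c1) * real n ^ 2 / real a ^ 2)" using sumeps by simp
  finally show "(\<Prod>i=2..n. K_ai a i (m i)) \<le> exp (exp (2 * c1) * real n ^ 2 / real a ^ 2)" .
  have "exp (- exp (2 * c1) * real n ^ 2 / real a ^ 2) \<le> exp (- (\<Sum>i=2..n. eps i))" using sumeps by simp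
  also have "\<dots> = (\<Prod>i=2..n. exp (- eps i))" by (simp add: exp_sum[symmetric] sum_negf)
  also have "\<dots> \<le> (\<Prod>i=2..n. K_ai a i (m i))"
    by (rule prod_mono) (use Ksb in auto)
  finally show "exp (- exp (2 * c1) * real n ^ 2 / real a ^ 2) \<le> (\<Prod>i=2..n. K_ai a i (m i))" .
qed

end
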